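(* For every prime power $q$, the equation $M_q\!\left(\frac{q-1}{x(q+1)}\right)=\frac{1}{x(q+1)}$ has a unique solution $x=c_q$ with $x\ge 1$. Moreover $c_q>1$.
   Context: $H_q(x)=x\log_q(q-1)-x\log_q x-(1-x)\log_q(1-x)$ is the $q$-ary entropy and $M_q(\delta)=H_q\!\left(\frac1q\left(q-1-(q-2)\delta-2\sqrt{(q-1)\delta(1-\delta)}\right)\right)$. $M_q$ is continuous and strictly decreasing on $[0,1-1/q]$ with $M_q(0)=1$ and $M_q(1-1/q)=0$. *)

theory Defs
  imports Complex_Main "HOL-Computational_Algebra.Primes"
begin

text \<open>q-ary entropy. Note: in Isabelle ln 0 = 0, so log q 0 = 0 and the
  terms 0 * log q 0 vanish, matching the standard convention 0 log 0 = 0.\<close>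
definition Hq :: "nat \<Rightarrow> real \<Rightarrow> real" where
  "Hq q x = x * log (real q) (real q - 1) - x * log (real q) x
            - (1 - x) * log (real q) (1 - x)"

definition Mq :: "nat \<Rightarrow> real \<Rightarrow> real" where
  "Mq q \<delta> = Hq q ((real q - 1 - (real q - 2) * \<delta>
                     - 2 * sqrt ((real q - 1) * \<delta> * (1 - \<delta>))) / real q)"

definition prime_power :: "nat \<Rightarrow> bool" where
  "prime_power q \<longleftrightarrow> (\<exists>p k. prime p \<and> k \<ge> 1 \<and> q = p ^ k)"

end

theory Submission imports Defs "HOL-Analysis.Analysis" begin

definition gq :: "nat \<Rightarrow> real \<Rightarrow> real" where
  "gq q d = (real q - 1 - (real q - 2) * d - 2 * sqrt ((real q - 1) * d * (1 - d))) / real q"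

lemma Mq_eq: "Mq q d = Hq q (gq q d)" by (simp add: Mq_def gq_def)

lemma gq_sq:
  assumes "q \<ge> 2" "0 \<le> d" "d \<le> 1"
  shows "gq q d = (sqrt ((real q - 1) * (1 - d)) - sqrt d)^2 / real q"
proof -
  have q: "real q \<ge> 2" using assms by simp
  have e: "sqrt ((real q - 1) * d * (1 - d)) = sqrt ((real q - 1) * (1 - d)) * sqrt d"
    by (metis mult.commute mult.left_commute real_sqrt_mult)
  have s1: "(sqrt ((real q - 1) * (1 - d)))^2 = (real q - 1) * (1 - d)"
    using q assms by simp
  have s2: "(sqrt d)^2 = d" using assms by simp
  show ?thesis unfolding gq_def e power2_diff s1 s2 by (simp add: algebra_simps)
qed

lemma gq_pos:
  assumes "q \<ge> 2" "0 \<le> d" "d < (real q - 1) / real q"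
  shows "0 < gq q d"
proof -
  have q: "real q \<ge> 2" using assms by simp
  have "(real q - 1) / real q \<le> 1" using q by simp
  hence d1: "d \<le> 1" using assms(3) by linarith
  have "d < (real q - 1) * (1 - d)" using assms(3) q by (simp add: field_simps)
  hence "sqrt d < sqrt ((real q - 1) * (1 - d))" by simp
  thus ?thesis using gq_sq[OF assms(1,2) d1] q by simp
qed

lemma gq_lt:
  assumes "q \<ge> 2" "0 < d" "d < 1"
  shows "gq q d < (real q - 1) / real q"
proof -
  have q: "real q \<ge> 2" using assms by simp
  have "sqrt ((real q - 1) * d * (1 - d)) > 0" using assms q by simp
  moreover have "(real q - 2) * d \<ge> 0" using q assms by simp
  ultimately have "real q - 1 - (real q - 2) * d - 2 * sqrt ((real q - 1) * d * (1 - d)) < real q - 1"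
    by linarith
  thus ?thesis unfolding gq_def using q by (simp add: divide_strict_right_mono)
qed

lemma gq_decr:
  assumes "q \<ge> 2" "0 \<le> d1" "d1 < d2" "d2 \<le> (real q - 1) / real q"
  shows "gq q d2 < gq q d1"
proof -
  have q: "real q \<ge> 2" using assms by simp
  have "(real q - 1) / real q \<le> 1" using q by simp
  hence d2: "d2 \<le> 1" using assms(4) by linarith
  have "d2 \<le> (real q - 1) * (1 - d2)" using assms(4) q by (simp add: field_simps)
  hence a: "sqrt d2 \<le> sqrt ((real q - 1) * (1 - d2))" by simp
  have b: "sqrt d1 < sqrt d2" using assms by simp
  have c: "sqrt ((real q - 1) * (1 - d2)) < sqrt ((real q - 1) * (1 - d1))"
    using assms q by simp
  have "(sqrt ((real q - 1) * (1 - d2)) - sqrt d2)^2 < (sqrt ((real q - 1) * (1 - d1)) - sqrt d1)^2"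
  proof (rule power_strict_mono)
    show "sqrt ((real q - 1) * (1 - d2)) - sqrt d2 < sqrt ((real q - 1) * (1 - d1)) - sqrt d1"
      using b c by linarith
    show "0 \<le> sqrt ((real q - 1) * (1 - d2)) - sqrt d2" using a by linarith
  qed simp
  thus ?thesis using gq_sq[OF assms(1) _ d2] gq_sq[OF assms(1,2)] assms q d2
    by (simp add: divide_strict_right_mono)
qed

lemma Hq_alt: "Hq q = (\<lambda>x. (x * ln (real q - 1) - x * ln x - (1 - x) * ln (1 - x)) / ln (real q))"
  by (rule ext) (simp add: Hq_def log_def diff_divide_distrib)

lemma Hq_deriv:
  assumes "q \<ge> 2" "0 < y" "y < 1"
  shows "DERIV (Hq q) y :> (ln (real q - 1) - ln y + ln (1 - y)) / ln (real q)"
proof -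
  have "DERIV (\<lambda>x. x * ln (real q - 1) - x * ln x - (1 - x) * ln (1 - x)) y :>
     (ln (real q - 1) - ln y + ln (1 - y))"
  proof -
    have h: "1 + y * y - y * 2 > 0" proof -
      have "(1 - y)^2 > 0" using assms by simp
      thus ?thesis by (simp add: power2_eq_square algebra_simps)
    qed
    show ?thesis using assms h
      by (auto intro!: derivative_eq_intros simp: field_simps)
  qed
  from DERIV_cdivide[OF this, of "ln (real q)"] show ?thesis unfolding Hq_alt by simp
qed

lemma Hq_mono:
  assumes "q \<ge> 2" "0 < a" "a < b" "b < (real q - 1) / real q"
  shows "Hq q a < Hq q b"
proof (rule DERIV_pos_imp_increasing[OF assms(3)])
  fix x assume x: "a \<le> x" "x \<le> b"
  have q: "real q \<ge> 2" using assms by simp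
  have x0: "0 < x" using x assms by simp
  have xq: "x < (real q - 1) / real q" using x assms by simp
  have "(real q - 1) / real q \<le> 1" using q by simp
  hence x1: "x < 1" using xq by linarith
  have "x < (real q - 1) * (1 - x)" using xq q by (simp add: field_simps)
  hence "ln x < ln ((real q - 1) * (1 - x))" using x0 by simp
  also have "\<dots> = ln (real q - 1) + ln (1 - x)" using q x1 by (simp add: ln_mult)
  finally have "0 < (ln (real q - 1) - ln x + ln (1 - x)) / ln (real q)"
    using q by simp
  thus "\<exists>y. DERIV (Hq q) x :> y \<and> 0 < y" using Hq_deriv[OF assms(1) x0 x1] by blast
qed

lemma Hq_cont:
  assumes "q \<ge> 2" "0 < y" "y < 1"
  shows "isCont (Hq q) y"
  using DERIV_isCont[OF Hq_deriv[OF assms]] .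

lemma Hq_top:
  assumes "q \<ge> 2"
  shows "Hq q ((real q - 1) / real q) = 1"
proof -
  have q: "real q \<ge> 2" using assms by simp
  have e1: "1 - (real q - 1) / real q = 1 / real q" using q by (simp add: field_simps)
  have e2: "ln ((real q - 1) / real q) = ln (real q - 1) - ln (real q)" using q by (simp add: ln_div)
  have e3: "ln (1 / real q) = - ln (real q)" using q by (simp add: ln_div)
  have L: "ln (real q) > 0" using q by simp
  show ?thesis unfolding Hq_alt using L q by (simp add: e1 e2 e3 field_simps)
qed

lemma gq_cont: "q \<ge> 2 \<Longrightarrow> isCont (gq q) d"
  unfolding gq_def[abs_def] by (auto intro!: continuous_intros)

lemma gq_0: "gq q 0 = (real q - 1) / real q"
  by (simp add: gq_def)

lemma sqrt2_bounds: "1.414 \<le> sqrt (2::real)" "sqrt (2::real) < 1.5"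
proof -
  have "sqrt (1.414^2) \<le> sqrt (2::real)" by (rule real_sqrt_le_mono) (simp add: power2_eq_square)
  thus "1.414 \<le> sqrt (2::real)" by simp
  have "sqrt (2::real) < sqrt (1.5^2)" by (rule real_sqrt_less_mono) (simp add: power2_eq_square)
  thus "sqrt (2::real) < 1.5" by simp
qed

lemma ln_inv_a: "ln (1 / (3 - 2 * sqrt 2)) \<le> (2::real)"
proof -
  have s: "sqrt 2 * sqrt 2 = (2::real)" by simp
  have a: "3 - 2 * sqrt 2 > (0::real)" using sqrt2_bounds by simp
  have "1 / (3 - 2 * sqrt 2) = 3 + 2 * sqrt (2::real)"
    using a s by (simp add: field_simps)
  also have "\<dots> \<le> 6" using sqrt2_bounds by simp
  also have "(6::real) \<le> exp 2"
  proof -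
    have "exp 1 \<ge> (2.7::real)" using e_approx_32 by (simp add: abs_if split: if_split_asm)
    hence "exp 1 * exp 1 \<ge> (2.7::real) * 2.7" by (intro mult_mono) auto
    moreover have "exp (2::real) = exp 1 * exp 1" by (simp add: exp_add[symmetric])
    ultimately show ?thesis by simp
  qed
  finally have "1 / (3 - 2 * sqrt 2) \<le> exp (2::real)" .
  hence "ln (1 / (3 - 2 * sqrt 2)) \<le> ln (exp (2::real))"
    using a by (subst ln_le_cancel_iff) auto
  thus ?thesis by simp
qed

lemma key_ineq:
  assumes "q \<ge> 2"
  shows "Mq q ((real q - 1) / (real q + 1)) < 1 / (real q + 1)"
proof -
  define Q where "Q = real q"
  have q: "Q \<ge> 2" using assms by (simp add: Q_def)
  define a where "a = 3 - 2 * sqrt (2::real)"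
  have a0: "a > 0" and a1: "a \<le> 0.172" using sqrt2_bounds by (auto simp: a_def)
  have la: "- ln a \<le> 2" using ln_inv_a a0 by (simp add: a_def ln_div)
  define d where "d = (Q - 1) / (Q + 1)"
  have "(Q - 1) * d * (1 - d) = 2 * ((Q - 1) / (Q + 1))^2"
    using q by (simp add: d_def field_simps power2_eq_square)
  hence "sqrt ((Q - 1) * d * (1 - d)) = sqrt 2 * ((Q - 1) / (Q + 1))"
    using q by (simp add: real_sqrt_mult)
  hence gd: "gq q d = (Q - 1) * a / (Q * (Q + 1))"
    unfolding gq_def Q_def[symmetric] a_def using q
    by (simp add: d_def field_simps)
  define y where "y = (Q - 1) * a / (Q * (Q + 1))"
  have y0: "0 < y" using q a0 by (simp add: y_def)
  have "(Q - 1) * a < Q * (Q + 1)" 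
  proof -
    have "(Q - 1) * a \<le> (Q - 1) * 1" using a1 q by (intro mult_left_mono) auto
    also have "\<dots> < Q * (Q + 1)" using q by (simp add: algebra_simps) (smt (verit) zero_le_mult_iff)
    finally show ?thesis .
  qed
  hence y1: "y < 1" using q by (simp add: y_def)
  define L where "L = ln Q"
  have L0: "L > 0" using q by (simp add: L_def)
  define N where "N = y * ln (Q - 1) - y * ln y - (1 - y) * ln (1 - y)"
  have HN: "Hq q y = N / L" unfolding Hq_alt N_def L_def Q_def ..
  have i: "- ((1 - y) * ln (1 - y)) \<le> y"
  proof -
    have "ln (1 / (1 - y)) \<le> 1 / (1 - y) - 1" using y1 by (intro ln_le_minus_one) simp
    hence "- ln (1 - y) \<le> y / (1 - y)" using y1 by (simp add: ln_div field_simps)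
    hence "(1 - y) * (- ln (1 - y)) \<le> (1 - y) * (y / (1 - y))"
      using y1 by (intro mult_left_mono) auto
    moreover have "(1 - y) * (y / (1 - y)) = y" using y1 by simp
    ultimately have "(1 - y) * (- ln (1 - y)) \<le> y" by simp
    moreover have "- ((1 - y) * ln (1 - y)) = (1 - y) * (- ln (1 - y))" by (simp only: mult_minus_right)
    ultimately show ?thesis by linarith
  qed
  have ii: "ln (Q - 1) - ln y = L + ln (Q + 1) - ln a"
    using q a0 by (simp add: y_def L_def ln_div ln_mult)
  have iii: "ln (Q + 1) \<le> L + 1/2"
  proof -
    have "ln ((Q + 1) / Q) \<le> (Q + 1) / Q - 1" using q by (intro ln_le_minus_one) simp
    also have "\<dots> = 1 / Q" using q by (simp add: field_simps)
    also have "\<dots> \<le> 1/2" using q by simp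
    finally show ?thesis using q by (simp add: L_def ln_div)
  qed
  have "N = y * (ln (Q - 1) - ln y) - (1 - y) * ln (1 - y)" by (simp add: N_def algebra_simps)
  also have "\<dots> \<le> y * (L + ln (Q + 1) - ln a) + y" using i ii by simp
  also have "\<dots> \<le> y * (7/2 + 2 * L)"
  proof -
    have "L + ln (Q + 1) - ln a \<le> 5/2 + 2 * L" using iii la by linarith
    hence "y * (L + ln (Q + 1) - ln a) \<le> y * (5/2 + 2 * L)" using y0 by (intro mult_left_mono) auto
    thus ?thesis by (simp add: algebra_simps)
  qed
  also have "\<dots> < L / (Q + 1)"
  proof -
    have A: "a * (7/2 + 2 * L) \<le> 0.172 * (7/2 + 2 * L)" using a1 L0 by (intro mult_right_mono) auto
    have B: "(Q - 1) * (a * (7/2 + 2 * L)) < Q * L"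
    proof (cases "q = 2")
      case True
      hence "Q = 2" by (simp add: Q_def)
      moreover have "L \<ge> 2/3" using ln2_ge_two_thirds by (simp add: L_def \<open>Q = 2\<close>)
      ultimately show ?thesis using A by simp
    next
      case False
      hence "Q \<ge> 3" using assms by (simp add: Q_def)
      hence L1: "L > 1" using ln3_gt_1 unfolding L_def
        by (smt (verit) ln_le_cancel_iff)
      have "(Q - 1) * (a * (7/2 + 2 * L)) \<le> (Q - 1) * (0.172 * (7/2 + 2 * L))"
        using A q by (intro mult_left_mono) auto
      also have "\<dots> < Q * (0.172 * (7/2 + 2 * L))" using L0 by (simp add: algebra_simps)
      also have "\<dots> \<le> Q * L" using L1 q by (intro mult_left_mono) auto
      finally show ?thesis .
    qed
    have "y * (7/2 + 2 * L) = ((Q - 1) * (a * (7/2 + 2 * L))) / (Q * (Q + 1))"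
      by (simp add: y_def)
    also have "\<dots> < (Q * L) / (Q * (Q + 1))" using B q by (intro divide_strict_right_mono) auto
    also have "\<dots> = L / (Q + 1)" using q by simp
    finally show ?thesis .
  qed
  finally have "N < L / (Q + 1)" .
  hence "N / L < 1 / (Q + 1)" using L0 q by (simp add: field_simps)
  thus ?thesis using HN gd unfolding Mq_eq d_def y_def Q_def by simp
qed

theorem corollaryA2:
  fixes q :: nat
  assumes "prime_power q"
  shows "\<exists>c::real. c > 1
           \<and> Mq q ((real q - 1) / (c * (real q + 1))) = 1 / (c * (real q + 1))
           \<and> (\<forall>x::real. x \<ge> 1 \<and> Mq q ((real q - 1) / (x * (real q + 1))) = 1 / (x * (real q + 1))
                  \<longrightarrow> x = c)"
proof -
  obtain p k where pk: "prime p" "k \<ge> 1" "q = p ^ k" using assms unfolding prime_power_def by blast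
  have "p \<ge> 2" using pk(1) by (simp add: prime_ge_2_nat)
  moreover have "p ^ 1 \<le> p ^ k" using pk(2) \<open>p \<ge> 2\<close> by (intro power_increasing) auto
  ultimately have q2: "q \<ge> 2" using pk(3) by simp
  define Q where "Q = real q"
  have Q2: "Q \<ge> 2" using q2 by (simp add: Q_def)
  define dl where "dl = (\<lambda>x::real. (Q - 1) / (x * (Q + 1)))"
  define F where "F = (\<lambda>x. Mq q (dl x) - 1 / (x * (Q + 1)))"
  have dl_pos: "0 < dl x" if "x \<ge> 1" for x using that Q2 by (simp add: dl_def)
  have dl_le: "dl x \<le> (Q - 1) / (Q + 1)" if "x \<ge> 1" for x
  proof -
    have "(Q - 1) / (x * (Q + 1)) \<le> (Q - 1) / (1 * (Q + 1))"
      using that Q2 by (intro divide_left_mono mult_right_mono) auto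
    thus ?thesis by (simp add: dl_def)
  qed
  have QQ: "(Q - 1) / (Q + 1) < (Q - 1) / Q" using Q2 by (intro divide_strict_left_mono) auto
  have Q1: "(Q - 1) / Q < 1" using Q2 by simp
  have dl_lt: "dl x < (Q - 1) / Q" if "x \<ge> 1" for x using dl_le[OF that] QQ by linarith
  have g_in: "0 < gq q (dl x) \<and> gq q (dl x) < (Q - 1) / Q" if "x \<ge> 1" for x
    using gq_pos[OF q2, of "dl x"] gq_lt[OF q2, of "dl x"] dl_pos[OF that] dl_lt[OF that] Q1
    unfolding Q_def by auto
  have mono: "F x < F x'" if "1 \<le> x" "x < x'" for x x'
  proof -
    have "dl x' < dl x" unfolding dl_def using that Q2
      by (intro divide_strict_left_mono mult_strict_right_mono) auto
    hence "gq q (dl x) < gq q (dl x')"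
      using gq_decr[OF q2, of "dl x'" "dl x"] dl_pos[of x'] dl_lt[of x] that
      unfolding Q_def by auto
    hence "Hq q (gq q (dl x)) < Hq q (gq q (dl x'))"
      using Hq_mono[OF q2] g_in[of x] g_in[of x'] that unfolding Q_def by auto
    moreover have "1 / (x' * (Q + 1)) < 1 / (x * (Q + 1))"
      using that Q2 by (intro divide_strict_left_mono mult_strict_right_mono) auto
    ultimately show ?thesis unfolding F_def Mq_eq by linarith
  qed
  have F1: "F 1 < 0" using key_ineq[OF q2] unfolding F_def dl_def Q_def by simp
  have contF: "isCont F x" if "x \<ge> 1" for x
  proof -
    have c1: "isCont dl x" unfolding dl_def using that Q2 by (auto intro!: continuous_intros)
    have c2: "isCont (\<lambda>x. Mq q (dl x)) x" unfolding Mq_eq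
      using that g_in[OF that] Q1
      by (intro isCont_o2[OF c1] isCont_o2[OF gq_cont[OF q2]] Hq_cont[OF q2]) (auto simp: Q_def)
    show ?thesis unfolding F_def using c2 that Q2 by (auto intro!: continuous_intros)
  qed
  have eqdl: "dl = (\<lambda>x. (Q - 1) / (Q + 1) * inverse x)"
    by (rule ext) (simp add: dl_def divide_inverse inverse_mult_distrib mult_ac)
  have "((\<lambda>x. (Q - 1) / (Q + 1) * inverse x) \<longlongrightarrow> (Q - 1) / (Q + 1) * 0) at_top"
    by (intro tendsto_mult tendsto_const tendsto_inverse_0_at_top filterlim_ident)
  hence lim_dl: "(dl \<longlongrightarrow> 0) at_top" unfolding eqdl by simp
  have "isCont (\<lambda>d. Hq q (gq q d)) 0"
    using Q1 Q2 by (intro isCont_o2[OF gq_cont[OF q2]] Hq_cont[OF q2]) (auto simp: gq_0 Q_def)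
  from isCont_tendsto_compose[OF this lim_dl]
  have "((\<lambda>x. Mq q (dl x)) \<longlongrightarrow> 1) at_top"
    unfolding Mq_eq using Hq_top[OF q2] by (simp add: gq_0)
  moreover have "((\<lambda>x. 1 / (x * (Q + 1))) \<longlongrightarrow> 0) at_top"
  proof -
    have eq: "(\<lambda>x. 1 / (x * (Q + 1))) = (\<lambda>x. 1 / (Q + 1) * inverse x)"
      by (rule ext) (simp add: divide_inverse inverse_mult_distrib mult_ac)
    have "((\<lambda>x. 1 / (Q + 1) * inverse x) \<longlongrightarrow> 1 / (Q + 1) * 0) at_top"
      by (intro tendsto_mult tendsto_const tendsto_inverse_0_at_top filterlim_ident)
    thus ?thesis unfolding eq by simp
  qed
  ultimately have "(F \<longlongrightarrow> 1 - 0) at_top" unfolding F_def by (intro tendsto_diff)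
  hence "(F \<longlongrightarrow> 1) at_top" by simp
  hence "eventually (\<lambda>x. F x > 0) at_top" using order_tendstoD(1)[of F "1::real" at_top 0] by simp
  then obtain N where N: "\<And>x. x \<ge> N \<Longrightarrow> F x > 0" by (auto simp: eventually_at_top_linorder)
  define X where "X = max N 1"
  have X1: "X \<ge> 1" and FX: "F X > 0" using N by (auto simp: X_def)
  have "continuous_on {1..X} F"
    by (intro continuous_at_imp_continuous_on) (auto intro: contF)
  then obtain c where c: "c \<ge> 1" "c \<le> X" "F c = 0"
    using IVT'[of F 1 0 X] F1 FX X1 by auto
  have c1: "c > 1" using c F1 by (cases "c = 1") auto
  show ?thesis
  proof (intro exI[of _ c] conjI allI impI)
    show "c > 1" by fact
    show "Mq q ((real q - 1) / (c * (real q + 1))) = 1 / (c * (real q + 1))"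
      using c(3) unfolding F_def dl_def Q_def by simp
    fix x assume x: "x \<ge> 1 \<and> Mq q ((real q - 1) / (x * (real q + 1))) = 1 / (x * (real q + 1))"
    hence Fx: "F x = 0" unfolding F_def dl_def Q_def by simp
    show "x = c"
    proof (rule ccontr)
      assume "x \<noteq> c"
      hence "x < c \<or> c < x" by linarith
      thus False using mono[of x c] mono[of c x] x c Fx by auto
    qed
  qed
qed

end
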